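(* Let $(S,\mathcal{S})$ be a measurable space, let $\mathcal{E}\subseteq \mathcal{P}(S)$ be a $\cap$-stable collection with $\sigma(\mathcal{E})=\mathcal{S}$, and let $\pi_{1},\pi_{2}:\Omega\to C(S)$ be two cr-sets. Suppose $\pi_{1}$ and $\pi_{2}$ are both $\sigma$-finite on $\mathcal{E}$ and satisfy \[ P_{\pi_{1}}(N_{A_{1}}=k_{1},\ldots, N_{A_{n}}=k_{n})=P_{\pi_{2}}(N_{A_{1}}=k_{1},\ldots, N_{A_{n}}=k_{n})\] for all $n\in \mathbb{N}$, all $A_{1},\ldots,A_{n}\in\mathcal{E}$ and all $k_{1},\ldots,k_{n}\in\mathbb{N}_{0}\cup\{\infty\}$. Then $P_{\pi_{1}}=P_{\pi_{2}}$.
   Context: $(\Omega,\mathcal{F},P)$ is a probability space. $C(S)$ denotes the set of all countable (finite or denumerable) subsets of $S$. For $A\subseteq S$, $N_A:C(S)\to\mathbb{N}_0\cup\{\infty\}$, $M\mapsto |A\cap M|$. $\mathcal{C}(\mathcal{S})$ is the smallest $\sigma$-field on $C(S)$ making all $N_A$, $A\in\mathcal{S}$, measurable. A countable random set (cr-set) is an $\mathcal{F}$-$\mathcal{C}(\mathcal{S})$ measurable map $\pi:\Omega\to C(S)$; $P_\pi$ denotes its law on $(C(S),\mathcal{C}(\mathcal{S}))$. A map $\tau:\Omega\to C(S)$ is finite if $|\tau(\omega)|<\infty$ for all $\omega$, and is $\sigma$-finite on $\mathcal{E}\subseteq\mathcal{S}$ if there are $A_n\in\mathcal{E}$, $n\in\mathbb{N}$,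 with $S=\bigcup_n A_n$ such that $|\tau(\omega)\cap A_n|<\infty$ for all $\omega\in\Omega$ and all $n$. *)

theory Defs
  imports "HOL-Probability.Probability"
begin

definition cset_space :: "'s set \<Rightarrow> 's set set" where
  "cset_space S = {M. M \<subseteq> S \<and> countable M}"

definition cnt :: "'s set \<Rightarrow> 's set \<Rightarrow> enat" where
  "cnt A M = (if finite (A \<inter> M) then enat (card (A \<inter> M)) else \<infinity>)"

definition cset_measure :: "'s measure \<Rightarrow> 's set measure" where
  "cset_measure Sm = sigma (cset_space (space Sm))
     (\<Union>A\<in>sets Sm. {cnt A -` B \<inter> cset_space (space Sm) | B. B \<subseteq> (UNIV :: enat set)})"

definition cr_set :: "'w measure \<Rightarrow> 's measure \<Rightarrow> ('w \<Rightarrow> 's set) \<Rightarrow> bool" where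
  "cr_set M Sm \<pi> \<longleftrightarrow> \<pi> \<in> measurable M (cset_measure Sm)"

definition cr_law :: "'w measure \<Rightarrow> 's measure \<Rightarrow> ('w \<Rightarrow> 's set) \<Rightarrow> 's set measure" where
  "cr_law M Sm \<pi> = distr M (cset_measure Sm) \<pi>"

definition sigma_finite_on :: "'w measure \<Rightarrow> 's set \<Rightarrow> 's set set \<Rightarrow> ('w \<Rightarrow> 's set) \<Rightarrow> bool" where
  "sigma_finite_on M S E \<tau> \<longleftrightarrow>
     (\<exists>A :: nat \<Rightarrow> 's set. range A \<subseteq> E \<and> S = (\<Union>n. A n) \<and>
        (\<forall>\<omega>\<in>space M. \<forall>n. finite (\<tau> \<omega> \<inter> A n)))"

end

theory Submission
  imports Defs
begin

definition hh :: "'s set \<Rightarrow> 's set \<Rightarrow> ennreal" where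
  "hh D X = emeasure (count_space UNIV) (D \<inter> X)"

lemma hh_cnt: "hh D X = ennreal_of_enat (cnt D X)"
  unfolding hh_def cnt_def by (simp add: emeasure_count_space ennreal_of_enat_enat)

lemma hh_union:
  assumes "disjoint_family F"
  shows "hh (\<Union>i. F i) X = (\<Sum>i. hh (F i) X)"
proof -
  have "(\<Sum>i. emeasure (count_space UNIV) (F i \<inter> X)) = emeasure (count_space UNIV) (\<Union>i. F i \<inter> X)"
    by (rule suminf_emeasure) (use assms in \<open>auto simp: disjoint_family_on_def\<close>)
  moreover have "(\<Union>i. F i \<inter> X) = (\<Union>i. F i) \<inter> X" by auto
  ultimately show ?thesis unfolding hh_def by simp
qed

lemma hh_diff:
  assumes "finite (C \<inter> X)"
  shows "hh (C - A) X = hh C X - hh (A \<inter> C) X"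
proof -
  have e: "(C - A) \<inter> X = C \<inter> X - (A \<inter> C \<inter> X)" by auto
  have f: "finite (A \<inter> C \<inter> X)" using assms by (rule finite_subset[rotated]) auto
  have "emeasure (count_space UNIV) (A \<inter> C \<inter> X) \<noteq> \<infinity>"
    using f by (simp add: emeasure_count_space)
  then have "emeasure (count_space UNIV) (C \<inter> X - A \<inter> C \<inter> X)
      = emeasure (count_space UNIV) (C \<inter> X) - emeasure (count_space UNIV) (A \<inter> C \<inter> X)"
    by (rule emeasure_Diff) auto
  then show ?thesis unfolding hh_def e .
qed

lemma space_cset: "space (cset_measure Sm) = cset_space (space Sm)"
  unfolding cset_measure_def by (rule space_measure_of) (auto simp: cset_space_def)

lemma sets_cset: "sets (cset_measure Sm) = sigma_sets (cset_space (space Sm))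
     (\<Union>A\<in>sets Sm. {cnt A -` B \<inter> cset_space (space Sm) | B. B \<subseteq> (UNIV :: enat set)})"
  unfolding cset_measure_def by (rule sets_measure_of) (auto simp: cset_space_def)

lemma cnt_set_cset:
  assumes "A \<in> sets Sm"
  shows "{X \<in> space (cset_measure Sm). cnt A X = k} \<in> sets (cset_measure Sm)"
proof -
  have "{X \<in> space (cset_measure Sm). cnt A X = k} = cnt A -` {k} \<inter> cset_space (space Sm)"
    by (auto simp: space_cset)
  also have "\<dots> \<in> sets (cset_measure Sm)"
    unfolding sets_cset by (rule sigma_sets.Basic) (use assms in blast)
  finally show ?thesis .
qed

theorem theorem1p1:
  fixes M :: "'w measure" and Sm :: "'s measure" and E :: "'s set set"
    and \<pi>1 \<pi>2 :: "'w \<Rightarrow> 's set"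
  assumes "prob_space M"
    and "E \<subseteq> Pow (space Sm)"
    and "Int_stable E"
    and "sigma_sets (space Sm) E = sets Sm"
    and "cr_set M Sm \<pi>1" and "cr_set M Sm \<pi>2"
    and "sigma_finite_on M (space Sm) E \<pi>1"
    and "sigma_finite_on M (space Sm) E \<pi>2"
    and "\<And>(n::nat) (A :: nat \<Rightarrow> 's set) (k :: nat \<Rightarrow> enat).
           n \<ge> 1 \<Longrightarrow> (\<forall>i<n. A i \<in> E) \<Longrightarrow>
           measure (cr_law M Sm \<pi>1) {X \<in> space (cset_measure Sm). \<forall>i<n. cnt (A i) X = k i}
         = measure (cr_law M Sm \<pi>2) {X \<in> space (cset_measure Sm). \<forall>i<n. cnt (A i) X = k i}"
  shows "cr_law M Sm \<pi>1 = cr_law M Sm \<pi>2"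
proof -
  note EPow = assms(2) and IE = assms(3) and sigE = assms(4)
  define Om where "Om = space (cset_measure Sm)"
  define CS where "CS = cset_measure Sm"
  have ESm: "E \<subseteq> sets Sm"
  proof
    fix e assume "e \<in> E"
    then have "e \<in> sigma_sets (space Sm) E" by (rule sigma_sets.Basic)
    then show "e \<in> sets Sm" using sigE by simp
  qed
  have m1: "\<pi>1 \<in> measurable M CS" using assms(5) unfolding cr_set_def CS_def .
  have m2: "\<pi>2 \<in> measurable M CS" using assms(6) unfolding cr_set_def CS_def .
  have pM: "prob_space M" by fact
  obtain A1 :: "nat \<Rightarrow> 's set" where A1: "range A1 \<subseteq> E" "space Sm = (\<Union>n. A1 n)"
    "\<forall>\<omega>\<in>space M. \<forall>n. finite (\<pi>1 \<omega> \<inter> A1 n)"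
    using assms(7) unfolding sigma_finite_on_def by blast
  obtain A2 :: "nat \<Rightarrow> 's set" where A2: "range A2 \<subseteq> E" "space Sm = (\<Union>n. A2 n)"
    "\<forall>\<omega>\<in>space M. \<forall>n. finite (\<pi>2 \<omega> \<inter> A2 n)"
    using assms(8) unfolding sigma_finite_on_def by blast
  define C where "C j = A1 (fst (prod_decode j)) \<inter> A2 (snd (prod_decode j))" for j
  have CE: "C j \<in> E" for j unfolding C_def using A1(1) A2(1) IE by (simp add: Int_stable_def subset_eq)
  have CS_sub: "C j \<subseteq> space Sm" for j using CE EPow by blast
  have Ccov: "space Sm = (\<Union>j. C j)"
  proof
    show "space Sm \<subseteq> (\<Union>j. C j)"
    proof
      fix x assume x: "x \<in> space Sm"
      have "x \<in> (\<Union>n. A1 n)" "x \<in> (\<Union>n. A2 n)" using x A1(2) A2(2) by simp_all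
      then obtain a b where "x \<in> A1 a" "x \<in> A2 b" by blast
      then have "x \<in> C (prod_encode (a,b))" unfolding C_def by simp
      then show "x \<in> (\<Union>j. C j)" by blast
    qed
  qed (use CS_sub in blast)
  have fin1: "finite (C j \<inter> \<pi>1 \<omega>)" if "\<omega> \<in> space M" for j \<omega>
    by (rule finite_subset[of _ "\<pi>1 \<omega> \<inter> A1 (fst (prod_decode j))"]) (use A1(3) that in \<open>auto simp: C_def\<close>)
  have fin2: "finite (C j \<inter> \<pi>2 \<omega>)" if "\<omega> \<in> space M" for j \<omega>
    by (rule finite_subset[of _ "\<pi>2 \<omega> \<inter> A2 (snd (prod_decode j))"]) (use A2(3) that in \<open>auto simp: C_def\<close>)
  define G where "G = {{X\<in>Om. \<forall>i<n. cnt (A i) X = k i} | n A k. \<forall>i<(n::nat). A i \<in> E}"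
  have GPow: "G \<subseteq> Pow Om" unfolding G_def by auto
  have GI: "{X\<in>Om. \<forall>i<n. cnt (A i) X = k i} \<in> G" if "\<forall>i<n. A i \<in> E" for n :: nat and A k
    unfolding G_def using that by blast
  have GD: "\<exists>(n::nat) A k. Y = {X\<in>Om. \<forall>i<n. cnt (A i) X = k i} \<and> (\<forall>i<n. A i \<in> E)" if "Y \<in> G" for Y
    using that unfolding G_def by blast
  have GIS: "Int_stable G"
  proof (rule Int_stableI)
    fix a b assume aG: "a \<in> G" and bG: "b \<in> G"
    obtain n :: nat and A k where a: "a = {X\<in>Om. \<forall>i<n. cnt (A i) X = k i}" "\<forall>i<n. A i \<in> E"
      using GD[OF aG] by blast
    obtain m :: nat and B l where b: "b = {X\<in>Om. \<forall>i<m. cnt (B i) X = l i}" "\<forall>i<m. B i \<in> E"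
      using GD[OF bG] by blast
    define A' where "A' i = (if i < n then A i else B (i - n))" for i
    define k' where "k' i = (if i < n then k i else l (i - n))" for i
    have "a \<inter> b = {X\<in>Om. \<forall>i<n+m. cnt (A' i) X = k' i}"
    proof (rule set_eqI, rule iffI)
      fix X assume X: "X \<in> a \<inter> b"
      have "cnt (A' i) X = k' i" if i: "i < n+m" for i
      proof (cases "i < n")
        case True
        then show ?thesis using X unfolding a b A'_def k'_def by simp
      next
        case False
        then have "i - n < m" using i by simp
        then show ?thesis using X False unfolding a b A'_def k'_def by simp
      qed
      then show "X \<in> {X\<in>Om. \<forall>i<n+m. cnt (A' i) X = k' i}"
        using X unfolding a by blast
    next
      fix X assume X: "X \<in> {X\<in>Om. \<forall>i<n+m. cnt (A' i) X = k' i}"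
      have XO: "X \<in> Om" and Xc: "\<And>i. i < n+m \<Longrightarrow> cnt (A' i) X = k' i" using X by blast+
      have "cnt (A i) X = k i" if "i < n" for i
      proof -
        have "i < n + m" using that by simp
        from Xc[OF this] show ?thesis using that unfolding A'_def k'_def by simp
      qed
      moreover have "cnt (B i) X = l i" if "i < m" for i
      proof -
        have "n + i < n + m" using that by simp
        from Xc[OF this] show ?thesis unfolding A'_def k'_def by simp
      qed
      ultimately show "X \<in> a \<inter> b" using XO unfolding a b by blast
    qed
    moreover have "A' i \<in> E" if i: "i < n+m" for i
    proof (cases "i < n")
      case True then show ?thesis using a unfolding A'_def by simp
    next
      case False
      then have "i - n < m" using i by simp
      then show ?thesis using b False unfolding A'_def by simp
    qed
    ultimately show "a \<inter> b \<in> G" using GI[of "n+m" A' k'] by simp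
  qed
  have GCS: "G \<subseteq> sets CS"
  proof
    fix Y assume YG: "Y \<in> G"
    obtain n :: nat and A k where Y: "Y = {X\<in>Om. \<forall>i<n. cnt (A i) X = k i}" "\<forall>i<n. A i \<in> E"
      using GD[OF YG] by blast
    show "Y \<in> sets CS"
    proof (cases "n = 0")
      case True then have "Y = space CS" using Y by (simp add: Om_def CS_def)
      then show ?thesis by simp
    next
      case False
      have "Y = (\<Inter>i\<in>{..<n}. {X \<in> space CS. cnt (A i) X = k i})"
      proof (rule set_eqI)
        fix X
        have "0 \<in> {..<n}" using False by simp
        then show "X \<in> Y \<longleftrightarrow> X \<in> (\<Inter>i\<in>{..<n}. {X \<in> space CS. cnt (A i) X = k i})"
          unfolding Y(1) Om_def CS_def by blast
      qed
      also have "\<dots> \<in> sets CS"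
        using False Y ESm unfolding CS_def by (intro sets.countable_INT) (auto intro!: cnt_set_cset)
      finally show ?thesis .
    qed
  qed
  define N where "N = sigma Om G"
  have spN: "space N = Om" unfolding N_def using GPow by (rule space_measure_of)
  have setsN: "sets N = sigma_sets Om G" unfolding N_def using GPow by (rule sets_measure_of)
  have NCS: "sets N \<subseteq> sets CS"
    unfolding setsN Om_def CS_def[symmetric] by (rule sets.sigma_sets_subset) (use GCS in auto)
  have GN: "G \<subseteq> sets N" unfolding setsN by auto
  have cntE: "cnt D \<in> measurable N (count_space UNIV)" if "D \<in> E" for D
  proof (subst measurable_count_space_eq_countable, simp, intro conjI ballI)
    fix a :: enat
    have "cnt D -` {a} \<inter> space N = {X\<in>Om. \<forall>i<(1::nat). cnt ((\<lambda>_. D) i) X = (\<lambda>_. a) i}"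
      using spN by auto
    also have "\<dots> \<in> G" using that by (intro GI) simp
    finally show "cnt D -` {a} \<inter> space N \<in> sets N" using GN by blast
  qed simp
  define L where "L = {X\<in>Om. \<forall>j. finite (C j \<inter> X)}"
  have LN: "L \<in> sets N"
  proof -
    have "L = space N \<inter> (\<Inter>j. cnt (C j) -` (UNIV - {\<infinity>}) \<inter> space N)"
      unfolding L_def spN by (auto simp: cnt_def)
    also have "\<dots> \<in> sets N"
      using cntE[OF CE] by (intro sets.Int sets.top sets.countable_INT) (auto intro: measurable_sets)
    finally show ?thesis .
  qed
  have LOm: "L \<subseteq> Om" unfolding L_def by auto
  define R where "R = restrict_space N L"
  have spR: "space R = L" unfolding R_def using LOm spN by (auto simp: space_restrict_space)
  have hhE: "hh D \<in> borel_measurable R" if "D \<in> E" for D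
  proof -
    have "(\<lambda>X. ennreal_of_enat (cnt D X)) \<in> borel_measurable N"
      by (rule measurable_compose[OF cntE[OF that]]) (simp add: measurable_count_space_eq1)
    then have "hh D \<in> borel_measurable N" by (simp add: hh_cnt[abs_def])
    then show ?thesis unfolding R_def by (rule measurable_restrict_space1)
  qed
  have step2: "hh (A \<inter> C j) \<in> borel_measurable R" if "A \<in> sigma_sets (space Sm) E" for A j
    using IE EPow that
  proof (induction rule: sigma_sets_induct_disjoint)
    case (basic A)
    then show ?case using CE IE by (intro hhE) (auto simp: Int_stable_def)
  next
    case empty
    have "hh ({} \<inter> C j) = (\<lambda>X. 0)" by (auto simp: hh_def fun_eq_iff)
    then show ?case by simp
  next
    case (compl A)
    have "(\<lambda>X. hh (C j) X - hh (A \<inter> C j) X) \<in> borel_measurable R"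
      using hhE[OF CE] compl.IH by (rule borel_measurable_minus_ennreal)
    moreover have "hh ((space Sm - A) \<inter> C j) X = hh (C j) X - hh (A \<inter> C j) X" if "X \<in> space R" for X
    proof -
      have "(space Sm - A) \<inter> C j = C j - A" using CS_sub by auto
      moreover have "finite (C j \<inter> X)" using that spR unfolding L_def by auto
      ultimately show ?thesis using hh_diff by metis
    qed
    ultimately show ?case using measurable_cong by (smt (verit, ccfv_SIG))
  next
    case (union F)
    have df: "disjoint_family (\<lambda>i. F i \<inter> C j)"
      using union.hyps(1) by (auto simp: disjoint_family_on_def)
    have "hh ((\<Union>i. F i) \<inter> C j) = (\<lambda>X. \<Sum>i. hh (F i \<inter> C j) X)"
    proof
      fix X have "(\<Union>i. F i) \<inter> C j = (\<Union>i. F i \<inter> C j)" by auto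
      then show "hh ((\<Union>i. F i) \<inter> C j) X = (\<Sum>i. hh (F i \<inter> C j) X)"
        using hh_union[OF df] by simp
    qed
    then show ?case using union.IH by (simp add: borel_measurable_suminf_order)
  qed
  have step3: "hh A \<in> borel_measurable R" if "A \<in> sets Sm" for A
  proof -
    define F where "F j = A \<inter> disjointed C j" for j
    have df: "disjoint_family F" using disjoint_family_disjointed[of C]
      unfolding F_def by (auto simp: disjoint_family_on_def)
    have dC: "disjointed C j \<in> sets Sm" for j
      using sets.range_disjointed_sets[of C Sm] CE ESm by blast
    have "hh A X = (\<Sum>j. hh (F j \<inter> C j) X)" if "X \<in> space R" for X
    proof -
      have XS: "X \<subseteq> space Sm" using that spR LOm unfolding Om_def by (auto simp: space_cset cset_space_def)
      have "A \<inter> X = (\<Union>j. F j) \<inter> X"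
        using XS Ccov UN_disjointed_eq[of C] unfolding F_def by blast
      then have "hh A X = hh (\<Union>j. F j) X" unfolding hh_def by simp
      also have "\<dots> = (\<Sum>j. hh (F j) X)" by (rule hh_union[OF df])
      also have "\<dots> = (\<Sum>j. hh (F j \<inter> C j) X)"
      proof -
        have "F j \<inter> C j = F j" for j unfolding F_def disjointed_def by auto
        then show ?thesis by simp
      qed
      finally show ?thesis .
    qed
    moreover have "(\<lambda>X. \<Sum>j. hh (F j \<inter> C j) X) \<in> borel_measurable R"
    proof (rule borel_measurable_suminf_order)
      fix j have "F j \<in> sigma_sets (space Sm) E" unfolding F_def sigE using that dC by auto
      then show "hh (F j \<inter> C j) \<in> borel_measurable R" by (rule step2)
    qed
    ultimately show ?thesis using measurable_cong by (smt (verit, ccfv_SIG))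
  qed
  have LcntN: "{X \<in> L. cnt A X = k} \<in> sets N" if "A \<in> sets Sm" for A k
  proof -
    have "{X \<in> L. cnt A X = k} = hh A -` {ennreal_of_enat k} \<inter> space R"
      using spR by (auto simp: hh_cnt ennreal_of_enat_inj)
    also have "\<dots> \<in> sets R" using step3[OF that] by (rule measurable_sets) simp
    finally show ?thesis unfolding R_def using sets_restrict_space_iff[of L N] LN spN LOm
      by (simp add: Int_absorb2)
  qed
  have traceL: "Y \<inter> L \<in> sets N" if "Y \<in> sets CS" for Y
  proof -
    have "Y \<in> sigma_sets Om (\<Union>A\<in>sets Sm. {cnt A -` B \<inter> cset_space (space Sm) | B. B \<subseteq> (UNIV :: enat set)})"
      using that unfolding CS_def Om_def sets_cset space_cset .
    then show ?thesis
    proof (induction rule: sigma_sets.induct)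
      case (Basic a)
      then obtain A B where AB: "A \<in> sets Sm" "a = cnt A -` B \<inter> cset_space (space Sm)" by blast
      have "a \<inter> L = (\<Union>k\<in>B. {X \<in> L. cnt A X = k})"
        using AB LOm unfolding Om_def space_cset by auto
      also have "\<dots> \<in> sets N" using LcntN[OF AB(1)] by (intro sets.countable_UN') auto
      finally show ?case .
    next
      case Empty then show ?case by simp
    next
      case (Compl a)
      have "(Om - a) \<inter> L = L - (a \<inter> L)" using LOm by auto
      then show ?case using Compl.IH LN by auto
    next
      case (Union a)
      have "(\<Union>i. a i) \<inter> L = (\<Union>i. a i \<inter> L)" by auto
      moreover have "(\<Union>i. a i \<inter> L) \<in> sets N" using Union.IH by (intro sets.countable_UN) auto
      ultimately show ?case by simp
    qed
  qed
  define \<mu>1 where "\<mu>1 = cr_law M Sm \<pi>1"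
  define \<mu>2 where "\<mu>2 = cr_law M Sm \<pi>2"
  have p1: "prob_space \<mu>1" unfolding \<mu>1_def cr_law_def CS_def[symmetric]
    using prob_space.prob_space_distr[OF pM m1] .
  have p2: "prob_space \<mu>2" unfolding \<mu>2_def cr_law_def CS_def[symmetric]
    using prob_space.prob_space_distr[OF pM m2] .
  have s1: "sets \<mu>1 = sets CS" and s2: "sets \<mu>2 = sets CS"
    unfolding \<mu>1_def \<mu>2_def cr_law_def CS_def by simp_all
  have sp1: "space \<mu>1 = Om" and sp2: "space \<mu>2 = Om"
    unfolding \<mu>1_def \<mu>2_def cr_law_def Om_def by simp_all
  have eqG: "emeasure \<mu>1 Y = emeasure \<mu>2 Y" if "Y \<in> sigma_sets Om G" for Y
    using GIS GPow that
  proof (induction rule: sigma_sets_induct_disjoint)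
    case (basic Y)
    obtain n :: nat and A k where Y: "Y = {X\<in>Om. \<forall>i<n. cnt (A i) X = k i}" "\<forall>i<n. A i \<in> E"
      using GD[OF basic] by blast
    show ?case
    proof (cases "n = 0")
      case True
      then have "Y = Om" using Y by simp
      then show ?thesis using prob_space.emeasure_space_1[OF p1] prob_space.emeasure_space_1[OF p2]
        sp1 sp2 by simp
    next
      case False
      then have "measure \<mu>1 Y = measure \<mu>2 Y" using assms(9)[of n A k] Y
        unfolding \<mu>1_def \<mu>2_def Om_def by simp
      then show ?thesis
        using finite_measure.emeasure_eq_measure[OF prob_space.axioms(1)[OF p1]]
          finite_measure.emeasure_eq_measure[OF prob_space.axioms(1)[OF p2]] by metis
    qed
  next
    case empty then show ?case by simp
  next
    case (compl Y)
    have YS: "Y \<in> sets CS" using compl.hyps NCS setsN by blast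
    have "emeasure \<mu>1 (space \<mu>1 - Y) = emeasure \<mu>1 (space \<mu>1) - emeasure \<mu>1 Y"
      using YS s1 finite_measure.emeasure_finite[OF prob_space.axioms(1)[OF p1]]
      by (intro emeasure_compl) auto
    moreover have "emeasure \<mu>2 (space \<mu>2 - Y) = emeasure \<mu>2 (space \<mu>2) - emeasure \<mu>2 Y"
      using YS s2 finite_measure.emeasure_finite[OF prob_space.axioms(1)[OF p2]]
      by (intro emeasure_compl) auto
    ultimately show ?case using compl.IH sp1 sp2
      prob_space.emeasure_space_1[OF p1] prob_space.emeasure_space_1[OF p2] by simp
  next
    case (union F)
    have FS: "range F \<subseteq> sets CS" using union.hyps(2) NCS setsN by blast
    show ?case
      using suminf_emeasure[of F \<mu>1] suminf_emeasure[of F \<mu>2] FS s1 s2 union.hyps(1) union.IH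
      by simp
  qed
  have inL1: "\<pi>1 \<omega> \<in> L" if "\<omega> \<in> space M" for \<omega>
    using measurable_space[OF m1 that] fin1[OF that] unfolding L_def Om_def CS_def by auto
  have inL2: "\<pi>2 \<omega> \<in> L" if "\<omega> \<in> space M" for \<omega>
    using measurable_space[OF m2 that] fin2[OF that] unfolding L_def Om_def CS_def by auto
  show ?thesis
  proof (fold \<mu>1_def \<mu>2_def, rule measure_eqI)
    show "sets \<mu>1 = sets \<mu>2" using s1 s2 by simp
  next
    fix Y assume "Y \<in> sets \<mu>1"
    then have Y: "Y \<in> sets CS" using s1 by simp
    have YL: "Y \<inter> L \<in> sets CS" using traceL[OF Y] NCS by blast
    have "emeasure \<mu>1 Y = emeasure M (\<pi>1 -` Y \<inter> space M)"
      unfolding \<mu>1_def cr_law_def CS_def[symmetric] using Y m1 by (simp add: emeasure_distr)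
    also have "\<dots> = emeasure M (\<pi>1 -` (Y \<inter> L) \<inter> space M)"
      using inL1 by (intro arg_cong[where f="emeasure M"]) auto
    also have "\<dots> = emeasure \<mu>1 (Y \<inter> L)"
      unfolding \<mu>1_def cr_law_def CS_def[symmetric] using YL m1 by (simp add: emeasure_distr)
    also have "\<dots> = emeasure \<mu>2 (Y \<inter> L)" using eqG traceL[OF Y] setsN by simp
    also have "\<dots> = emeasure M (\<pi>2 -` (Y \<inter> L) \<inter> space M)"
      unfolding \<mu>2_def cr_law_def CS_def[symmetric] using YL m2 by (simp add: emeasure_distr)
    also have "\<dots> = emeasure M (\<pi>2 -` Y \<inter> space M)"
      using inL2 by (intro arg_cong[where f="emeasure M"]) auto
    also have "\<dots> = emeasure \<mu>2 Y"
      unfolding \<mu>2_def cr_law_def CS_def[symmetric] using Y m2 by (simp add: emeasure_distr)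
    finally show "emeasure \<mu>1 Y = emeasure \<mu>2 Y" .
  qed
qed

end
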